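(* With the notation of the context, assume that every distinct affine local piece of $u^*$ on $\Omega$ appears among the sampled functions $u_1,\dots,u_{N_s}$. Define $\varepsilon=\max_{\bm x\in\Omega}\big(\hat f_{\mathrm{L,c}}(\bm x)-\hat f_{\mathrm{L,d}}(\bm x)\big)$. Then for all $\bm x\in\Omega$, $$-\varepsilon\le \hat f_{\mathrm{L,d}}(\bm x)-u^*(\bm x)\le 0\qquad\text{and}\qquad 0\le \hat f_{\mathrm{L,c}}(\bm x)-u^*(\bm x)\le\varepsilon;$$ in particular $\hat f_{\mathrm{L,d}}\le u^*\le\hat f_{\mathrm{L,c}}$ on $\Omega$. Furthermore, if $\varepsilon=0$, then $\hat f_{\mathrm{L,d}}(\bm x)=\hat f_{\mathrm{L,c}}(\bm x)=u^*(\bm x)$ for all $\bm x\in\Omega$.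
   Context: Let $\Omega\subseteq\mathbb{R}^{n_x}$ be a convex polyhedron (a hyperbox) and $u^*:\Omega\to\mathbb{R}$ a continuous piecewise affine (PWA) function: $\Omega$ is the union of finitely many closed convex polyhedra (local regions) with pairwise disjoint interiors, and on each local region $u^*$ coincides with an affine function (its local piece). (In the paper $u^*$ is the first input of the explicit linear MPC law.) A unique order (UO) region is a closed convex polyhedron contained in a local region on whose interior the order of all distinct local pieces of $u^*$ is constant; $\Omega$ is the union of finitely many UO regions. Sample points $\bm x_1,\dots,\bm x_{N_s}\in\Omega$ are given, each in the interior of a UO region $\Gamma(\bm x_i)$, and $u_i$ denotes the local piece of $u^*$ on $\Gamma(\bm x_i)$. Define $J_{\geq,i}=\{j\in\{1,\dots,N_s\}: u_j(\bm x_i)\ge u_i(\bm x_i)\}$, $J_{\leq,i}=\{j\in\{1,\dots,N_s\}: u_j(\bm x_i)\le u_i(\bm x_i)\}$, $\hat f_{\mathrm{L,d}}(\bm x)=\max_{i=1,\dots,N_s}\min_{j\in J_{\geq,i}}u_j(\bm x)$ and $\hat f_{\mathrm{L,c}}(\bm x)=\min_{i=1,\dots,N_s}\max_{j\in J_{\leq,i}}u_j(\bm x)$. *)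

theory Defs
  imports "HOL-Analysis.Analysis"
begin

definition affine_fun :: "('a::euclidean_space \<Rightarrow> real) \<Rightarrow> bool" where
  "affine_fun f \<longleftrightarrow> (\<exists>c b. \<forall>x. f x = c \<bullet> x + b)"

definition pwa_on :: "'a::euclidean_space set \<Rightarrow> ('a \<Rightarrow> real) \<Rightarrow> 'a set set \<Rightarrow> ('a set \<Rightarrow> 'a \<Rightarrow> real) \<Rightarrow> bool" where
  "pwa_on \<Omega> u R pc \<longleftrightarrow>
     finite R \<and> \<Union>R = \<Omega> \<and> (\<forall>r\<in>R. polyhedron r) \<and>
     (\<forall>r\<in>R. \<forall>s\<in>R. r \<noteq> s \<longrightarrow> interior r \<inter> interior s = {}) \<and>
     (\<forall>r\<in>R. affine_fun (pc r) \<and> (\<forall>x\<in>r. u x = pc r x))"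

definition uo_regions :: "'a::euclidean_space set \<Rightarrow> 'a set set \<Rightarrow> ('a set \<Rightarrow> 'a \<Rightarrow> real) \<Rightarrow> 'a set set \<Rightarrow> bool" where
  "uo_regions \<Omega> R pc U \<longleftrightarrow>
     finite U \<and> \<Union>U = \<Omega> \<and>
     (\<forall>G\<in>U. polyhedron G \<and> (\<exists>r\<in>R. G \<subseteq> r) \<and>
        (\<forall>g\<in>pc ` R. \<forall>h\<in>pc ` R. \<forall>x\<in>interior G. \<forall>y\<in>interior G. (g x \<le> h x \<longleftrightarrow> g y \<le> h y)))"

definition Jge :: "nat \<Rightarrow> (nat \<Rightarrow> 'a) \<Rightarrow> (nat \<Rightarrow> 'a \<Rightarrow> real) \<Rightarrow> nat \<Rightarrow> nat set" where
  "Jge N xs us i = {j \<in> {1..N}. us j (xs i) \<ge> us i (xs i)}"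

definition Jle :: "nat \<Rightarrow> (nat \<Rightarrow> 'a) \<Rightarrow> (nat \<Rightarrow> 'a \<Rightarrow> real) \<Rightarrow> nat \<Rightarrow> nat set" where
  "Jle N xs us i = {j \<in> {1..N}. us j (xs i) \<le> us i (xs i)}"

definition fLd :: "nat \<Rightarrow> (nat \<Rightarrow> 'a) \<Rightarrow> (nat \<Rightarrow> 'a \<Rightarrow> real) \<Rightarrow> 'a \<Rightarrow> real" where
  "fLd N xs us x = (MAX i\<in>{1..N}. (MIN j\<in>Jge N xs us i. us j x))"

definition fLc :: "nat \<Rightarrow> (nat \<Rightarrow> 'a) \<Rightarrow> (nat \<Rightarrow> 'a \<Rightarrow> real) \<Rightarrow> 'a \<Rightarrow> real" where
  "fLc N xs us x = (MIN i\<in>{1..N}. (MAX j\<in>Jle N xs us i. us j x))"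

end

theory Submission
  imports Defs
begin

lemma key1d:
  fixes F :: "real \<Rightarrow> real" and P :: "(real \<Rightarrow> real) set"
  assumes contF: "continuous_on {0..1} F" and finP: "finite P"
    and aff: "\<forall>\<phi>\<in>P. \<exists>c d. \<forall>t. \<phi> t = c*t + d"
    and cov: "\<forall>t\<in>{0..1}. \<exists>\<phi>\<in>P. F t = \<phi> t"
  shows "\<exists>\<phi>\<in>P. \<phi> 0 \<ge> F 0 \<and> \<phi> 1 \<le> F 1"
proof (rule ccontr)
  assume nc: "\<not> ?thesis"
  define A where "A = {\<phi>\<in>P. \<phi> 0 \<ge> F 0}"
  have A1: "\<phi> 1 > F 1" if "\<phi> \<in> A" for \<phi> using nc that unfolding A_def by force
  have contphi: "continuous_on S \<phi>" if pp: "\<phi> \<in> P" for \<phi> S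
  proof -
    obtain c d where "\<forall>t. \<phi> t = c*t + d" using aff pp by blast
    then have "\<phi> = (\<lambda>t. c*t+d)" by auto
    then show ?thesis by (simp add: continuous_intros)
  qed
  define S where "S = {t\<in>{0..1}. \<exists>\<phi>\<in>A. F t = \<phi> t}"
  have SU: "S = (\<Union>\<phi>\<in>A. {t\<in>{0..1}. F t - \<phi> t = 0})" unfolding S_def by auto
  have "closed S" unfolding SU
  proof (rule closed_UN, (use finP A_def in auto)[1], rule ballI)
    fix \<phi> assume "\<phi> \<in> A"
    then have "continuous_on {0..1} (\<lambda>t. F t - \<phi> t)"
      using contF contphi[of \<phi>] A_def by (auto intro: continuous_intros)
    then show "closed {t\<in>{0..1}. F t - \<phi> t = 0}"
      by (rule continuous_closed_preimage_constant) simp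
  qed
  have "0 \<in> S"
  proof -
    obtain \<phi> where "\<phi>\<in>P" "F 0 = \<phi> 0" using cov by force
    then show ?thesis unfolding S_def A_def by force
  qed
  have bS: "bdd_above S" unfolding S_def by (rule bdd_aboveI[of _ 1]) auto
  define t0 where "t0 = Sup S"
  have t0S: "t0 \<in> S" unfolding t0_def using \<open>closed S\<close> \<open>0\<in>S\<close> bS closed_contains_Sup by blast
  have leT0: "t \<le> t0" if "t \<in> S" for t unfolding t0_def using bS that by (simp add: cSup_upper)
  obtain j where jA: "j \<in> A" and Fj: "F t0 = j t0" and t01: "t0 \<in> {0..1}" using t0S S_def by auto
  have "t0 \<noteq> 1" using A1[OF jA] Fj by auto
  with t01 have t0l: "t0 < 1" by auto
  define K where "K = {k\<in>P. k t0 < F t0}"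
  have ev: "eventually (\<lambda>t. \<forall>k\<in>K. 0 < F t - k t) (at_right t0)"
  proof (rule eventually_ball_finite)
    show "finite K" using finP K_def by auto
    show "\<forall>k\<in>K. eventually (\<lambda>t. 0 < F t - k t) (at_right t0)"
    proof
      fix k assume kK: "k \<in> K"
      have "continuous_on {t0..1} (\<lambda>t. F t - k t)"
        using contF contphi[of k] kK K_def t01
        by (auto intro!: continuous_intros intro: continuous_on_subset)
      then have "((\<lambda>t. F t - k t) \<longlongrightarrow> F t0 - k t0) (at t0 within {t0..1})"
        using t0l by (simp add: continuous_on_def)
      then have "((\<lambda>t. F t - k t) \<longlongrightarrow> F t0 - k t0) (at_right t0)"
        using t0l by (simp add: at_within_Icc_at_right)
      then show "eventually (\<lambda>t. 0 < F t - k t) (at_right t0)"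
        by (rule order_tendstoD) (use kK K_def in auto)
    qed
  qed
  have "eventually (\<lambda>t. t \<in> {t0<..<1} \<and> (\<forall>k\<in>K. 0 < F t - k t)) (at_right t0)"
    using ev eventually_at_right_real[OF t0l] by (auto elim: eventually_elim2)
  then obtain t' where t'1: "t' \<in> {t0<..<1}" and t'K: "\<forall>k\<in>K. 0 < F t' - k t'"
    using eventually_happens[of _ "at_right t0"] by auto
  obtain k where kP: "k \<in> P" and Fk: "F t' = k t'" using cov t'1 t01 by force
  have "k \<notin> K" using t'K Fk by auto
  then have kt0: "k t0 \<ge> F t0" using kP K_def by auto
  have "k \<notin> A" using leT0[of t'] t'1 Fk t01 kP unfolding S_def by auto
  then have k0: "k 0 < F 0" using kP A_def by auto
  have j0: "j 0 \<ge> F 0" using jA A_def by auto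
  obtain c1 d1 where e1: "\<forall>t. j t = c1*t + d1" using aff jA A_def by blast
  obtain c2 d2 where e2: "\<forall>t. k t = c2*t + d2" using aff kP by blast
  have "j t' < k t'"
  proof -
    have a: "d1 > d2" using e1 e2 j0 k0 by (metis add_0 mult_zero_right order.strict_trans2)
    have b: "c1*t0 + d1 \<le> c2*t0 + d2" using e1 e2 Fj kt0 by metis
    have "t0 \<ge> 0" using t01 by auto
    have c: "c1 - c2 < 0"
    proof (rule ccontr)
      assume "\<not> c1 - c2 < 0"
      then have "(c1 - c2) * t0 \<ge> 0" using \<open>t0\<ge>0\<close> by simp
      then show False using a b by (simp add: algebra_simps)
    qed
    have "(c1 - c2) * t' < (c1 - c2) * t0" using c t'1 by (simp add: mult_strict_left_mono_neg)
    then show ?thesis using e1 e2 b by (simp add: algebra_simps)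
  qed
  then have h1: "j t' - F t' \<le> 0" using Fk by simp
  have h2: "0 \<le> j 1 - F 1" using A1[OF jA] by simp
  have "continuous_on {t'..1} (\<lambda>t. j t - F t)"
    using contF contphi[of j] jA A_def t'1 t01
    by (auto intro!: continuous_intros intro: continuous_on_subset)
  then obtain t'' where "t'' \<ge> t'" "t'' \<le> 1" "j t'' - F t'' = 0"
    using IVT'[of "\<lambda>t. j t - F t" t' 0 1, OF h1 h2] t'1 by force
  then have "t'' \<in> S" using S_def jA t'1 t01 by force
  then show False using leT0 \<open>t'' \<ge> t'\<close> t'1 by fastforce
qed

lemma lift:
  fixes S :: "'a::euclidean_space set" and u :: "'a \<Rightarrow> real"
  assumes cS: "convex S" and cu: "continuous_on S u" and fR: "finite R" and UR: "\<Union>R = S"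
    and pcs: "\<forall>r\<in>R. affine_fun (pc r) \<and> (\<forall>x\<in>r. u x = pc r x)"
    and yS: "y \<in> S" and xS: "x \<in> S"
  shows "\<exists>g\<in>pc`R. g y \<ge> u y \<and> g x \<le> u x"
proof -
  define p where "p = (\<lambda>t::real. y + t *\<^sub>R (x - y))"
  have pS: "p t \<in> S" if "t \<in> {0..1}" for t
  proof -
    have "p t = (1 - t) *\<^sub>R y + t *\<^sub>R x" unfolding p_def by (simp add: algebra_simps)
    then show ?thesis using cS yS xS that unfolding convex_alt by auto
  qed
  have cp: "continuous_on {0..1} p" unfolding p_def by (intro continuous_intros)
  have cF: "continuous_on {0..1} (\<lambda>t. u (p t))"
    using continuous_on_compose2[OF cu cp] pS by (auto simp: image_subset_iff)
  define P where "P = (\<lambda>g t. g (p t)) ` (pc ` R)"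
  have "\<exists>\<phi>\<in>P. \<phi> 0 \<ge> u (p 0) \<and> \<phi> 1 \<le> u (p 1)"
  proof (rule key1d[OF cF])
    show "finite P" unfolding P_def using fR by simp
    show "\<forall>\<phi>\<in>P. \<exists>c d. \<forall>t. \<phi> t = c*t + d"
    proof
      fix \<phi> assume "\<phi> \<in> P"
      then obtain r where rR: "r \<in> R" and ph: "\<phi> = (\<lambda>t. pc r (p t))" unfolding P_def by auto
      obtain c b where cb: "\<forall>z. pc r z = c \<bullet> z + b" using pcs rR unfolding affine_fun_def by blast
      have "\<forall>t. \<phi> t = (c \<bullet> (x - y)) * t + (c \<bullet> y + b)"
        using cb unfolding ph p_def by (simp add: inner_add_right algebra_simps)
      then show "\<exists>c d. \<forall>t. \<phi> t = c*t + d" by blast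
    qed
    show "\<forall>t\<in>{0..1}. \<exists>\<phi>\<in>P. u (p t) = \<phi> t"
    proof
      fix t :: real assume "t \<in> {0..1}"
      then have "p t \<in> \<Union>R" using pS UR by auto
      then obtain r where "r \<in> R" "p t \<in> r" by auto
      then show "\<exists>\<phi>\<in>P. u (p t) = \<phi> t" unfolding P_def using pcs by force
    qed
  qed
  then obtain r where "r \<in> R" "pc r (p 0) \<ge> u (p 0)" "pc r (p 1) \<le> u (p 1)"
    unfolding P_def by auto
  moreover have "p 0 = y" "p 1 = x" unfolding p_def by auto
  ultimately show ?thesis by auto
qed


theorem theorem1:
  fixes a b :: "'a::euclidean_space" and u :: "'a \<Rightarrow> real"
    and R :: "'a set set" and pc :: "'a set \<Rightarrow> 'a \<Rightarrow> real" and U :: "'a set set"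
    and N :: nat and xs :: "nat \<Rightarrow> 'a" and us :: "nat \<Rightarrow> 'a \<Rightarrow> real"
  assumes cont: "continuous_on (cbox a b) u"
    and pwa: "pwa_on (cbox a b) u R pc"
    and uo: "uo_regions (cbox a b) R pc U"
    and samples: "\<forall>i\<in>{1..N}. \<exists>G\<in>U. xs i \<in> interior G \<and> (\<exists>r\<in>R. G \<subseteq> r \<and> us i = pc r)"
    and all_pieces: "pc ` R \<subseteq> us ` {1..N}"
  shows "let \<epsilon> = (SUP x\<in>cbox a b. fLc N xs us x - fLd N xs us x) in
     (\<forall>x\<in>cbox a b. - \<epsilon> \<le> fLd N xs us x - u x \<and> fLd N xs us x - u x \<le> 0 \<and>
                   0 \<le> fLc N xs us x - u x \<and> fLc N xs us x - u x \<le> \<epsilon> \<and>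
                   fLd N xs us x \<le> u x \<and> u x \<le> fLc N xs us x) \<and>
     (\<epsilon> = 0 \<longrightarrow> (\<forall>x\<in>cbox a b. fLd N xs us x = u x \<and> fLc N xs us x = u x))"
proof -
  let ?S = "cbox a b"
  have fR: "finite R" and UR: "\<Union>R = ?S"
    and pcs: "\<forall>r\<in>R. affine_fun (pc r) \<and> (\<forall>x\<in>r. u x = pc r x)"
    using pwa unfolding pwa_on_def by auto
  have cS: "convex ?S" by (rule convex_box)
  have pcs': "\<forall>r\<in>R. affine_fun (\<lambda>z. - pc r z) \<and> (\<forall>x\<in>r. - u x = - pc r x)"
  proof
    fix r assume rR: "r \<in> R"
    then obtain c d where "\<forall>z. pc r z = c \<bullet> z + d" using pcs unfolding affine_fun_def by blast
    then have "\<forall>z. - pc r z = (-c) \<bullet> z + (-d)" by simp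
    then have "affine_fun (\<lambda>z. - pc r z)" unfolding affine_fun_def by blast
    moreover have "\<forall>x\<in>r. - u x = - pc r x" using pcs rR by simp
    ultimately show "affine_fun (\<lambda>z. - pc r z) \<and> (\<forall>x\<in>r. - u x = - pc r x)" by blast
  qed
  have cu': "continuous_on ?S (\<lambda>x. - u x)" using cont by (intro continuous_intros)
  have xsS: "xs i \<in> ?S" and usu: "us i (xs i) = u (xs i)" and usaff: "affine_fun (us i)"
    if iN: "i \<in> {1..N}" for i
  proof -
    obtain G r where "G \<in> U" "xs i \<in> interior G" "r \<in> R" "G \<subseteq> r" "us i = pc r"
      using samples iN by blast
    note o = this
    have xr: "xs i \<in> r" using o(2,4) interior_subset by blast
    show "xs i \<in> ?S" using xr o(3) UR by blast
    show "us i (xs i) = u (xs i)" using xr o(3,5) pcs by simp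
    show "affine_fun (us i)" using o(3,5) pcs by simp
  qed
  have finJ: "finite (Jge N xs us i)" "finite (Jle N xs us i)" for i
    unfolding Jge_def Jle_def by auto
  have lowd: "fLd N xs us x \<le> u x" if xS: "x \<in> ?S" for x
  proof -
    have ne: "{1..N} \<noteq> {}"
    proof -
      obtain r where "r \<in> R" using xS UR by auto
      then show ?thesis using all_pieces by auto
    qed
    have "(MIN j\<in>Jge N xs us i. us j x) \<le> u x" if iN: "i \<in> {1..N}" for i
    proof -
      obtain g where gR: "g \<in> pc ` R" "g (xs i) \<ge> u (xs i)" "g x \<le> u x"
        using lift[OF cS cont fR UR pcs xsS[OF iN] xS] by blast
      then obtain j where jN: "j \<in> {1..N}" "g = us j" using all_pieces by auto
      then have "j \<in> Jge N xs us i" using gR usu[OF iN] unfolding Jge_def by auto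
      then have "(MIN j\<in>Jge N xs us i. us j x) \<le> us j x"
        using finJ by (intro Min_le) auto
      then show ?thesis using gR jN by auto
    qed
    then show ?thesis unfolding fLd_def using ne by (subst Max_le_iff) auto
  qed
  have upc: "u x \<le> fLc N xs us x" if xS: "x \<in> ?S" for x
  proof -
    have ne: "{1..N} \<noteq> {}"
    proof -
      obtain r where "r \<in> R" using xS UR by auto
      then show ?thesis using all_pieces by auto
    qed
    have "u x \<le> (MAX j\<in>Jle N xs us i. us j x)" if iN: "i \<in> {1..N}" for i
    proof -
      obtain g where gR: "g \<in> (\<lambda>r z. - pc r z) ` R" "g (xs i) \<ge> - u (xs i)" "g x \<le> - u x"
        using lift[OF cS cu' fR UR pcs' xsS[OF iN] xS] by blast
      then obtain r where rR: "r \<in> R" "g = (\<lambda>z. - pc r z)" by auto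
      then obtain j where jN: "j \<in> {1..N}" "pc r = us j" using all_pieces by force
      then have "j \<in> Jle N xs us i" using gR rR usu[OF iN] unfolding Jle_def by auto
      then have "us j x \<le> (MAX j\<in>Jle N xs us i. us j x)"
        using finJ by (intro Max_ge) auto
      then show ?thesis using gR jN rR by auto
    qed
    then show ?thesis unfolding fLc_def using ne by (subst Min_ge_iff) auto
  qed
  define h where "h x = (\<Sum>j\<in>{1..N}. \<bar>us j x\<bar>)" for x
  have ch: "continuous_on ?S h"
    unfolding h_def
  proof (intro continuous_on_sum continuous_on_rabs)
    fix j assume "j \<in> {1..N}"
    then obtain c d where "\<forall>z. us j z = c \<bullet> z + d" using usaff unfolding affine_fun_def by blast
    then have "us j = (\<lambda>z. c \<bullet> z + d)" by auto
    then show "continuous_on ?S (us j)" by (simp add: continuous_intros)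
  qed
  have "bounded (h ` ?S)" by (rule compact_imp_bounded, rule compact_continuous_image[OF ch]) simp
  then obtain B where B: "\<forall>x\<in>?S. \<bar>h x\<bar> \<le> B" unfolding bounded_iff by auto
  have valbound: "\<bar>us j x\<bar> \<le> h x" if "j \<in> {1..N}" for j x
    unfolding h_def using that by (intro member_le_sum) auto
  have dbound: "fLc N xs us x - fLd N xs us x \<le> 2 * B" if xS: "x \<in> ?S" for x
  proof -
    have ne: "{1..N} \<noteq> {}"
    proof -
      obtain r where "r \<in> R" using xS UR by auto
      then show ?thesis using all_pieces by auto
    qed
    have Jne: "i \<in> Jge N xs us i" "i \<in> Jle N xs us i" if "i \<in> {1..N}" for i
      using that unfolding Jge_def Jle_def by auto
    have "fLd N xs us x \<in> (\<lambda>i. MIN j\<in>Jge N xs us i. us j x) ` {1..N}"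
      unfolding fLd_def using ne by (intro Max_in) auto
    then obtain i where i: "i \<in> {1..N}" "fLd N xs us x = (MIN j\<in>Jge N xs us i. us j x)" by blast
    have "(MIN j\<in>Jge N xs us i. us j x) \<in> (\<lambda>j. us j x) ` Jge N xs us i"
      using finJ(1)[of i] Jne(1)[OF i(1)] by (intro Min_in) auto
    then obtain j where j: "j \<in> Jge N xs us i" "(MIN j\<in>Jge N xs us i. us j x) = us j x" by blast
    have "fLc N xs us x \<in> (\<lambda>i. MAX j\<in>Jle N xs us i. us j x) ` {1..N}"
      unfolding fLc_def using ne by (intro Min_in) auto
    then obtain i' where i': "i' \<in> {1..N}" "fLc N xs us x = (MAX j\<in>Jle N xs us i'. us j x)" by blast
    have "(MAX j\<in>Jle N xs us i'. us j x) \<in> (\<lambda>j. us j x) ` Jle N xs us i'"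
      using finJ(2)[of i'] Jne(2)[OF i'(1)] by (intro Max_in) auto
    then obtain j' where j': "j' \<in> Jle N xs us i'" "(MAX j\<in>Jle N xs us i'. us j x) = us j' x" by blast
    have "j \<in> {1..N}" "j' \<in> {1..N}" using j j' unfolding Jge_def Jle_def by auto
    then have "\<bar>us j x\<bar> \<le> B" "\<bar>us j' x\<bar> \<le> B"
      using valbound[of j x] valbound[of j' x] B xS by fastforce+
    then show ?thesis using i j i' j' by linarith
  qed
  have bdd: "bdd_above ((\<lambda>x. fLc N xs us x - fLd N xs us x) ` ?S)"
    using dbound by (intro bdd_aboveI2) auto
  define e where "e = (SUP x\<in>?S. fLc N xs us x - fLd N xs us x)"
  have le: "fLc N xs us x - fLd N xs us x \<le> e" if "x \<in> ?S" for x
    unfolding e_def using bdd that by (rule cSUP_upper2) auto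
  show ?thesis
    unfolding Let_def e_def[symmetric]
  proof (intro conjI ballI impI)
    fix x assume x: "x \<in> ?S"
    note h = le[OF x] lowd[OF x] upc[OF x]
    show "- e \<le> fLd N xs us x - u x" using h by linarith
    show "fLd N xs us x - u x \<le> 0" using h by linarith
    show "0 \<le> fLc N xs us x - u x" using h by linarith
    show "fLc N xs us x - u x \<le> e" using h by linarith
    show "fLd N xs us x \<le> u x" using h by linarith
    show "u x \<le> fLc N xs us x" using h by linarith
  next
    fix x assume "e = 0" and x: "x \<in> ?S"
    note h = le[OF x] lowd[OF x] upc[OF x]
    show "fLd N xs us x = u x" using h \<open>e = 0\<close> by linarith
    show "fLc N xs us x = u x" using h \<open>e = 0\<close> by linarith
  qed
qed

end
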